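(* Let $N\ge3$, let $v_1,\dots,v_N$ and $\beta_1,\dots,\beta_{N-1}$ be variables/constants, $f_n=v_n+v_{n+1}$ (indices mod $N$), and let $T(\lambda)=V_N(\lambda+\beta_{N-1})\cdots V_2(\lambda+\beta_1)V_1(\lambda)=\begin{pmatrix}A(\lambda)&B(\lambda)\\C(\lambda)&D(\lambda)\end{pmatrix}$ with $V_n(\lambda)=\begin{pmatrix}v_n&1\\ \lambda+v_n^2&v_n\end{pmatrix}$. Then there is a polynomial $\tilde A(\lambda)$ such that $A(\lambda)=B(\lambda)v_1+\tilde A(\lambda)\lambda$. Moreover $\tilde A(\lambda)=f_2$ for $N=3$, and for $N\ge4$ $$\tilde A(\lambda)=\prod_{n=2}^{N-2}\Bigl(1+(\lambda+\beta_n)\frac{\partial^2}{\partial f_n\partial f_{n+1}}\Bigr)(f_2\cdots f_{N-1}),$$ while for all $N\ge3$ $$B(\lambda)=\prod_{n=1}^{N-2}\Bigl(1+(\lambda+\beta_n)\frac{\partial^2}{\partial f_n\partial f_{n+1}}\Bigr)(f_1\cdots f_{N-1}).$$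
   Context: In the product formulas the monomial $f_m\cdots f_{N-1}$ is treated as a polynomial in independent variables $f_m,\dots,f_{N-1}$; the commuting differential operators are applied and then $f_n=v_n+v_{n+1}$ is substituted. *)

theory Defs
  imports "HOL-Computational_Algebra.Polynomial" "HOL-Library.Poly_Mapping"
begin

type_synonym 'a mat2 = "'a \<times> 'a \<times> 'a \<times> 'a"

definition mat2_mult :: "'a::comm_ring_1 mat2 \<Rightarrow> 'a mat2 \<Rightarrow> 'a mat2" where
  "mat2_mult X Y = (case X of (a, b, c, d) \<Rightarrow> case Y of (e, f, g, h) \<Rightarrow>
      (a * e + b * g, a * f + b * h, c * e + d * g, c * f + d * h))"

definition mA :: "'a mat2 \<Rightarrow> 'a" where "mA X = fst X"
definition mB :: "'a mat2 \<Rightarrow> 'a" where "mB X = fst (snd X)"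

definition Vmat :: "'a::comm_ring_1 \<Rightarrow> 'a poly \<Rightarrow> 'a poly mat2" where
  "Vmat vn x = ([:vn:], 1, x + [:vn ^ 2:], [:vn:])"

definition argpoly :: "(nat \<Rightarrow> 'a::comm_ring_1) \<Rightarrow> nat \<Rightarrow> 'a poly" where
  "argpoly \<beta> n = (if n \<le> 1 then [:0, 1:] else [:\<beta> (n - 1), 1:])"

fun Tprod :: "(nat \<Rightarrow> 'a::comm_ring_1) \<Rightarrow> (nat \<Rightarrow> 'a) \<Rightarrow> nat \<Rightarrow> 'a poly mat2" where
  "Tprod v \<beta> 0 = (1, 0, 0, 1)"
| "Tprod v \<beta> (Suc k) = mat2_mult (Vmat (v (Suc k)) (argpoly \<beta> (Suc k))) (Tprod v \<beta> k)"

type_synonym 'a mpoly = "(nat \<Rightarrow>\<^sub>0 nat) \<Rightarrow>\<^sub>0 'a"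

definition fmono :: "nat \<Rightarrow> nat \<Rightarrow> 'a::comm_ring_1 mpoly" where
  "fmono m k = Poly_Mapping.single (\<Sum>i\<in>{m..k}. Poly_Mapping.single i 1) 1"

definition pdiff :: "nat \<Rightarrow> 'a::comm_ring_1 mpoly \<Rightarrow> 'a mpoly" where
  "pdiff i p = (\<Sum>m\<in>Poly_Mapping.keys p.
      Poly_Mapping.single (m - Poly_Mapping.single i 1)
        (of_nat (Poly_Mapping.lookup m i) * Poly_Mapping.lookup p m))"

definition dop :: "nat \<Rightarrow> 'a::comm_ring_1 \<Rightarrow> 'a mpoly \<Rightarrow> 'a mpoly" where
  "dop n c p = p + Poly_Mapping.map (\<lambda>a. c * a) (pdiff n (pdiff (Suc n) p))"

text \<open>Product over n = m..k of the operators 1 + c_n d^2/(df_n df_(n+1)) (they commute).\<close>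
definition dops :: "(nat \<Rightarrow> 'a::comm_ring_1) \<Rightarrow> nat \<Rightarrow> nat \<Rightarrow> 'a mpoly \<Rightarrow> 'a mpoly" where
  "dops c m k p = foldr (\<lambda>n q. dop n (c n) q) [m..<Suc k] p"

definition meval :: "(nat \<Rightarrow> 'a::comm_ring_1) \<Rightarrow> 'a mpoly \<Rightarrow> 'a" where
  "meval g p = (\<Sum>m\<in>Poly_Mapping.keys p.
      Poly_Mapping.lookup p m * (\<Prod>i\<in>Poly_Mapping.keys m. g i ^ Poly_Mapping.lookup m i))"

end

theory Submission
  imports Defs
begin

lemma lookup_scale: "Poly_Mapping.lookup (Poly_Mapping.map (\<lambda>a. (c::'a::comm_ring_1) * a) p) k = c * Poly_Mapping.lookup p k"
  by (simp add: map.rep_eq when_def)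

lemma keys_scale: "Poly_Mapping.keys (Poly_Mapping.map (\<lambda>a. (c::'a::comm_ring_1) * a) p) \<subseteq> Poly_Mapping.keys p"
  by (auto simp: in_keys_iff lookup_scale)

lemma minus_single_add: "Poly_Mapping.lookup M i \<noteq> 0 \<Longrightarrow>
   (M - Poly_Mapping.single i (1::nat)) + Poly_Mapping.single i 1 = M"
  by (rule poly_mapping_eqI) (auto simp: lookup_add lookup_minus lookup_single when_def)

lemma lookup_pdiff: "Poly_Mapping.lookup (pdiff i p) N =
   of_nat (Poly_Mapping.lookup N i + 1) * Poly_Mapping.lookup p (N + Poly_Mapping.single i 1)"
proof -
  let ?d = "Poly_Mapping.single i (1::nat)"
  have "Poly_Mapping.lookup (pdiff i p) N = (\<Sum>M\<in>Poly_Mapping.keys p.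
     (if M = N + ?d then of_nat (Poly_Mapping.lookup N i + 1) * Poly_Mapping.lookup p M else 0))"
    unfolding pdiff_def lookup_sum
  proof (rule sum.cong[OF refl])
    fix M assume "M \<in> Poly_Mapping.keys p"
    show "Poly_Mapping.lookup (Poly_Mapping.single (M - ?d) (of_nat (Poly_Mapping.lookup M i) * Poly_Mapping.lookup p M)) N =
      (if M = N + ?d then of_nat (Poly_Mapping.lookup N i + 1) * Poly_Mapping.lookup p M else 0)"
    proof (cases "M = N + ?d")
      case True
      then show ?thesis by (simp add: lookup_single lookup_add)
    next
      case False
      show ?thesis
      proof (cases "Poly_Mapping.lookup M i = 0")
        case True then show ?thesis using False by (simp add: lookup_single when_def)
      next
        case nz: False
        have "M - ?d \<noteq> N" using False minus_single_add[OF nz] by auto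
        then show ?thesis using False by (simp add: lookup_single when_def)
      qed
    qed
  qed
  also have "\<dots> = of_nat (Poly_Mapping.lookup N i + 1) * Poly_Mapping.lookup p (N + ?d)"
    by (simp add: sum.delta in_keys_iff)
  finally show ?thesis .
qed

lemma lookup_dop: "Poly_Mapping.lookup (dop n c p) N = Poly_Mapping.lookup p N +
   c * (of_nat (Poly_Mapping.lookup N n + 1) * (of_nat (Poly_Mapping.lookup N (Suc n) + 1) *
     Poly_Mapping.lookup p (N + Poly_Mapping.single n 1 + Poly_Mapping.single (Suc n) 1)))"
  by (simp add: dop_def lookup_add lookup_scale lookup_pdiff lookup_single)

lemma pdiff_dop: "pdiff i (dop n c p) = dop n c (pdiff i p)"
  apply (rule poly_mapping_eqI)
  apply (simp add: lookup_pdiff lookup_dop lookup_add lookup_single when_def)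
  apply (simp add: ac_simps)
  apply (auto simp: algebra_simps)
  done


definition mon :: "(nat \<Rightarrow> 'a::comm_ring_1) \<Rightarrow> (nat \<Rightarrow>\<^sub>0 nat) \<Rightarrow> 'a" where
  "mon g M = (\<Prod>i\<in>Poly_Mapping.keys M. g i ^ Poly_Mapping.lookup M i)"

lemma meval_superset: "finite K \<Longrightarrow> Poly_Mapping.keys p \<subseteq> K \<Longrightarrow>
  meval g p = (\<Sum>M\<in>K. Poly_Mapping.lookup p M * mon g M)"
  unfolding meval_def mon_def
  by (rule sum.mono_neutral_left) (auto simp: in_keys_iff)

lemma meval_add: "meval g (p + q) = meval g p + meval g q"
proof -
  let ?K = "Poly_Mapping.keys p \<union> Poly_Mapping.keys q"
  have "meval g (p + q) = (\<Sum>M\<in>?K. Poly_Mapping.lookup (p + q) M * mon g M)"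
    by (rule meval_superset) (auto dest: set_mp[OF keys_add])
  also have "\<dots> = (\<Sum>M\<in>?K. Poly_Mapping.lookup p M * mon g M) + (\<Sum>M\<in>?K. Poly_Mapping.lookup q M * mon g M)"
    by (simp add: lookup_add distrib_right sum.distrib)
  also have "\<dots> = meval g p + meval g q"
    by (simp add: meval_superset[symmetric])
  finally show ?thesis .
qed

lemma meval_scale: "meval g (Poly_Mapping.map (\<lambda>a. c * a) p) = c * meval g p"
proof -
  have "meval g (Poly_Mapping.map (\<lambda>a. c * a) p) = (\<Sum>M\<in>Poly_Mapping.keys p. Poly_Mapping.lookup (Poly_Mapping.map (\<lambda>a. c * a) p) M * mon g M)"
    by (rule meval_superset) (auto simp: keys_scale[THEN set_mp])
  also have "\<dots> = c * meval g p"
    by (simp add: lookup_scale meval_superset[OF _ order_refl] sum_distrib_left mult.assoc)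
  finally show ?thesis .
qed

lemma meval_zero[simp]: "meval g 0 = 0" by (simp add: meval_def)

lemma pdiff_zero[simp]: "pdiff i 0 = 0" by (simp add: pdiff_def)

lemma dop_zero[simp]: "dop n c 0 = 0" by (rule poly_mapping_eqI) (simp add: lookup_dop)

lemma dops_zero[simp]: "dops c m k 0 = 0"
proof -
  have "foldr (\<lambda>n q. dop n (c n) q) xs 0 = 0" for xs by (induction xs) auto
  then show ?thesis by (simp add: dops_def)
qed

lemma dops_step: "m \<le> k \<Longrightarrow> dops c m k p = dop m (c m) (dops c (Suc m) k p)"
  by (simp add: dops_def upt_conv_Cons del: upt_Suc)

lemma dops_empty: "k < m \<Longrightarrow> dops c m k p = p"
  by (simp add: dops_def)

lemma pdiff_dops: "pdiff i (dops c m k p) = dops c m k (pdiff i p)"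
proof -
  have "pdiff i (foldr (\<lambda>n q. dop n (c n) q) xs p) = foldr (\<lambda>n q. dop n (c n) q) xs (pdiff i p)" for xs
    by (induction xs) (auto simp: pdiff_dop)
  then show ?thesis by (simp add: dops_def)
qed

definition eS :: "nat set \<Rightarrow> (nat \<Rightarrow>\<^sub>0 nat)" where
  "eS S = (\<Sum>i\<in>S. Poly_Mapping.single i 1)"

definition mono :: "nat set \<Rightarrow> 'a::comm_ring_1 mpoly" where
  "mono S = Poly_Mapping.single (eS S) 1"

lemma lookup_eS: "finite S \<Longrightarrow> Poly_Mapping.lookup (eS S) i = (if i \<in> S then 1 else 0)"
  by (simp add: eS_def lookup_sum lookup_single when_def)

lemma keys_eS: "finite S \<Longrightarrow> Poly_Mapping.keys (eS S) = S"
  by (auto simp: in_keys_iff lookup_eS split: if_splits)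

lemma eS_remove: "finite S \<Longrightarrow> i \<in> S \<Longrightarrow> eS S = eS (S - {i}) + Poly_Mapping.single i 1"
  by (simp add: eS_def sum.remove add.commute)

lemma pdiff_mono: "finite S \<Longrightarrow> pdiff i (mono S :: 'a::comm_ring_1 mpoly) = (if i \<in> S then mono (S - {i}) else 0)"
proof (rule poly_mapping_eqI)
  fix N assume fin: "finite S"
  show "Poly_Mapping.lookup (pdiff i (mono S :: 'a mpoly)) N = Poly_Mapping.lookup (if i \<in> S then mono (S - {i}) else 0) N"
  proof (cases "i \<in> S")
    case True
    have "(eS S = N + Poly_Mapping.single i 1) = (eS (S - {i}) = N)"
      using eS_remove[OF fin True] by simp
    moreover have "eS (S - {i}) = N \<Longrightarrow> Poly_Mapping.lookup N i = 0"
      using fin by (auto simp: lookup_eS)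
    ultimately show ?thesis using True
      by (auto simp: lookup_pdiff mono_def lookup_single when_def)
  next
    case False
    have "eS S \<noteq> N + Poly_Mapping.single i 1"
    proof
      assume "eS S = N + Poly_Mapping.single i 1"
      then have "Poly_Mapping.lookup (eS S) i = Poly_Mapping.lookup N i + 1" by (simp add: lookup_add)
      then show False using False fin by (simp add: lookup_eS)
    qed
    then show ?thesis using False
      by (auto simp: lookup_pdiff mono_def lookup_single when_def)
  qed
qed

lemma meval_mono: "finite S \<Longrightarrow> meval g (mono S) = (\<Prod>i\<in>S. g i)"
proof -
  assume fin: "finite S"
  have "meval g (mono S) = (\<Sum>M\<in>{eS S}. Poly_Mapping.lookup (mono S) M * mon g M)"
    by (rule meval_superset) (auto simp: mono_def)
  also have "\<dots> = (\<Prod>i\<in>S. g i)"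
    using fin by (simp add: mono_def mon_def keys_eS lookup_eS)
  finally show ?thesis .
qed


definition Q :: "(nat \<Rightarrow> 'a::comm_ring_1) \<Rightarrow> (nat \<Rightarrow> 'a) \<Rightarrow> nat \<Rightarrow> nat \<Rightarrow> nat set \<Rightarrow> 'a" where
  "Q g c m k S = meval g (dops c m k (mono S))"

lemma Q_empty: "finite S \<Longrightarrow> k < m \<Longrightarrow> Q g c m k S = (\<Prod>i\<in>S. g i)"
  by (simp add: Q_def dops_empty meval_mono)

lemma Q_step: "finite S \<Longrightarrow> m \<le> k \<Longrightarrow> Q g c m k S = Q g c (Suc m) k S +
   (if m \<in> S \<and> Suc m \<in> S then c m * Q g c (Suc m) k (S - {m, Suc m}) else 0)"
proof -
  assume fin: "finite S" and mk: "m \<le> k"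
  let ?P = "dops c (Suc m) k (mono S)"
  have "dops c m k (mono S) = ?P + Poly_Mapping.map (\<lambda>a. c m * a) (pdiff m (pdiff (Suc m) ?P))"
    using mk by (simp add: dops_step dop_def)
  moreover have "pdiff m (pdiff (Suc m) ?P) = dops c (Suc m) k (pdiff m (pdiff (Suc m) (mono S)))"
    by (simp add: pdiff_dops)
  moreover have "pdiff m (pdiff (Suc m) (mono S)) = (if m \<in> S \<and> Suc m \<in> S then mono (S - {m, Suc m}) else (0::'a mpoly))"
    using fin by (auto simp: pdiff_mono insert_commute Diff_insert2[symmetric] intro: arg_cong[where f=mono])
  ultimately show ?thesis
    by (simp add: Q_def meval_add meval_scale)
qed

lemma Q_insert: "finite S \<Longrightarrow> j \<notin> S \<Longrightarrow> j < m \<Longrightarrow> Q g c m k (insert j S) = g j * Q g c m k S"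
proof (induction "Suc k - m" arbitrary: m S)
  case 0
  then show ?case by (simp add: Q_empty)
next
  case (Suc d)
  then have mk: "m \<le> k" by simp
  have e1: "(m \<in> insert j S) = (m \<in> S)" "(Suc m \<in> insert j S) = (Suc m \<in> S)" using Suc.prems by auto
  have e2: "insert j S - {m, Suc m} = insert j (S - {m, Suc m})" using Suc.prems by auto
  have IH1: "Q g c (Suc m) k (insert j S) = g j * Q g c (Suc m) k S"
    using Suc by simp
  have IH2: "Q g c (Suc m) k (insert j (S - {m, Suc m})) = g j * Q g c (Suc m) k (S - {m, Suc m})"
    using Suc by simp
  show ?case
    using Suc.prems mk
    by (simp add: Q_step[of "insert j S"] Q_step[of S] e1 e2 IH1 IH2 algebra_simps)
qed

fun cont :: "(nat \<Rightarrow> 'a::comm_ring_1) \<Rightarrow> (nat \<Rightarrow> 'a) \<Rightarrow> nat \<Rightarrow> nat \<Rightarrow> 'a" where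
  "cont g c m 0 = 1"
| "cont g c m (Suc 0) = g m"
| "cont g c m (Suc (Suc n)) = g (m + n + 1) * cont g c m (Suc n) + c (m + n) * cont g c m n"

lemma cont_bottom: "cont g c m (Suc (Suc n)) = g m * cont g c (Suc m) (Suc n) + c m * cont g c (Suc (Suc m)) n"
proof (induction n rule: less_induct)
  case (less n)
  show ?case
  proof (cases n)
    case 0 then show ?thesis by (simp add: algebra_simps)
  next
    case (Suc n1)
    show ?thesis
    proof (cases n1)
      case 0 then show ?thesis using Suc by (simp add: algebra_simps)
    next
      case (Suc n2)
      have IH1: "cont g c m (Suc (Suc (Suc n2))) = g m * cont g c (Suc m) (Suc (Suc n2)) + c m * cont g c (Suc (Suc m)) (Suc n2)"
        using less[of "Suc n2"] \<open>n = Suc n1\<close> Suc by simp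
      have IH2: "cont g c m (Suc (Suc n2)) = g m * cont g c (Suc m) (Suc n2) + c m * cont g c (Suc (Suc m)) n2"
        using less[of "n2"] \<open>n = Suc n1\<close> Suc by simp
      have L: "cont g c m (Suc (Suc (Suc (Suc n2)))) = g (m + n2 + 3) * cont g c m (Suc (Suc (Suc n2))) + c (m + n2 + 2) * cont g c m (Suc (Suc n2))"
        by (simp add: numeral_eq_Suc)
      have R1: "cont g c (Suc m) (Suc (Suc (Suc n2))) = g (m + n2 + 3) * cont g c (Suc m) (Suc (Suc n2)) + c (m + n2 + 2) * cont g c (Suc m) (Suc n2)"
        by (simp add: numeral_eq_Suc)
      have R2: "cont g c (Suc (Suc m)) (Suc (Suc n2)) = g (m + n2 + 3) * cont g c (Suc (Suc m)) (Suc n2) + c (m + n2 + 2) * cont g c (Suc (Suc m)) n2"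
        by (simp add: numeral_eq_Suc)
      show ?thesis
        using \<open>n = Suc n1\<close> Suc
        apply (simp only: L R1 R2 IH1 IH2)
        apply (simp add: algebra_simps)
        done
    qed
  qed
qed

lemma Q_cont: "1 \<le> m \<Longrightarrow> Q g c m (m + n - 2) {m..<m + n} = cont g c m n"
proof (induction n arbitrary: m rule: less_induct)
  case (less n)
  show ?case
  proof (cases n)
    case 0 then show ?thesis using less.prems by (simp add: Q_empty)
  next
    case (Suc n1)
    show ?thesis
    proof (cases n1)
      case 0 then show ?thesis using less.prems Suc by (simp add: Q_empty)
    next
      case (Suc n2)
      have n: "n = Suc (Suc n2)" using Suc \<open>n = Suc n1\<close> by simp
      have k: "m + n - 2 = m + n2" using n by simp
      have A: "Q g c (Suc m) (m + n2) {m..<m + n} = g m * Q g c (Suc m) (m + n2) {Suc m..<m + n}"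
      proof -
        have "{m..<m + n} = insert m {Suc m..<m + n}" using n by auto
        then show ?thesis by (simp add: Q_insert)
      qed
      have A2: "Q g c (Suc m) (m + n2) {Suc m..<m + n} = cont g c (Suc m) (Suc n2)"
        using less.IH[of "Suc n2" "Suc m"] n by simp
      have B0: "{m..<m + n} - {m, Suc m} = {Suc (Suc m)..<m + n}" using n by auto
      have B: "Q g c (Suc m) (m + n2) {Suc (Suc m)..<m + n} = cont g c (Suc (Suc m)) n2"
      proof (cases n2)
        case 0 then show ?thesis using n by (simp add: Q_empty)
      next
        case (Suc n3)
        then have "Q g c (Suc m) (m + n2) {Suc (Suc m)..<m + n} = Q g c (Suc (Suc m)) (m + n2) {Suc (Suc m)..<m + n}"
          by (simp add: Q_step)
        also have "\<dots> = cont g c (Suc (Suc m)) n2"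
          using less.IH[of n2 "Suc (Suc m)"] n by simp
        finally show ?thesis .
      qed
      define S where "S = {m..<m + n}"
      have fin: "finite S" and inS: "m \<in> S" "Suc m \<in> S" using n by (auto simp: S_def)
      have "Q g c m (m + n - 2) {m..<m + n} = Q g c (Suc m) (m + n2) S + c m * Q g c (Suc m) (m + n2) (S - {m, Suc m})"
        unfolding k S_def[symmetric] using Q_step[OF fin, of m "m + n2" g c] inS by simp
      also have "\<dots> = g m * cont g c (Suc m) (Suc n2) + c m * cont g c (Suc (Suc m)) n2"
        unfolding S_def A A2 B0 B ..
      finally have "Q g c m (m + n - 2) {m..<m + n} = g m * cont g c (Suc m) (Suc n2) + c m * cont g c (Suc (Suc m)) n2" .
      then show ?thesis unfolding n cont_bottom .
    qed
  qed
qed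


lemma pc_sq: "[:(a::'a::comm_ring_1) ^ 2:] = [:a:] * [:a:]"
  by (simp add: power2_eq_square)
lemma T_rec:
  fixes v \<beta> :: "nat \<Rightarrow> 'a::comm_ring_1"
  shows "mA (Tprod v \<beta> (Suc (Suc j))) = [:v (Suc j) + v (Suc (Suc j)):] * mA (Tprod v \<beta> (Suc j)) + argpoly \<beta> (Suc j) * mA (Tprod v \<beta> j)
   \<and> mB (Tprod v \<beta> (Suc (Suc j))) = [:v (Suc j) + v (Suc (Suc j)):] * mB (Tprod v \<beta> (Suc j)) + argpoly \<beta> (Suc j) * mB (Tprod v \<beta> j)"
proof -
  obtain a b c d where T: "Tprod v \<beta> j = (a, b, c, d)" by (cases "Tprod v \<beta> j") auto
  define x where "x = argpoly \<beta> (Suc j)"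
  define y where "y = argpoly \<beta> (Suc (Suc j))"
  define p where "p = [:v (Suc j):]"
  define q where "q = [:v (Suc (Suc j)):]"
  have f: "[:v (Suc j) + v (Suc (Suc j)):] = p + q" by (simp add: p_def q_def)
  show ?thesis
    unfolding f
    by (simp add: T mat2_mult_def Vmat_def mA_def mB_def pc_sq flip: x_def y_def p_def q_def) (simp add: algebra_simps)
qed
lemma argpoly_Suc: "argpoly \<beta> (Suc j) = (if j = 0 then [:0, 1:] else [:\<beta> j, 1:])"
  by (simp add: argpoly_def)

lemma T_small:
  fixes v \<beta> :: "nat \<Rightarrow> 'a::comm_ring_1"
  shows "mA (Tprod v \<beta> 0) = 1" "mB (Tprod v \<beta> 0) = 0" "mA (Tprod v \<beta> (Suc 0)) = [:v 1:]" "mB (Tprod v \<beta> (Suc 0)) = 1"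
  by (simp_all add: mat2_mult_def Vmat_def mA_def mB_def)

lemma B_cont:
  fixes v \<beta> :: "nat \<Rightarrow> 'a::comm_ring_1"
  defines "F \<equiv> (\<lambda>n. [:v n + v (Suc n):])" and "C \<equiv> (\<lambda>n. [:\<beta> n, 1:])"
  shows "mB (Tprod v \<beta> (Suc k)) = cont F C 1 k
   \<and> mA (Tprod v \<beta> (Suc (Suc k))) - mB (Tprod v \<beta> (Suc (Suc k))) * [:v 1:] = [:0, 1:] * cont F C 2 k"
proof (induction k rule: less_induct)
  case (less k)
  define A where "A = (\<lambda>k. mA (Tprod v \<beta> k))"
  define B where "B = (\<lambda>k. mB (Tprod v \<beta> k))"
  define L where "L = ([:0, 1:] :: 'a poly)"
  define P where "P = [:v 1:]"
  have R: "A (Suc (Suc j)) = F (Suc j) * A (Suc j) + (if j = 0 then L else C j) * A j"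
    "B (Suc (Suc j)) = F (Suc j) * B (Suc j) + (if j = 0 then L else C j) * B j" for j
    using T_rec[of v \<beta> j] by (simp_all only: A_def B_def F_def C_def L_def argpoly_Suc)
  have S: "A 0 = 1" "B 0 = 0" "A (Suc 0) = P" "B (Suc 0) = 1"
    unfolding A_def B_def P_def using T_small by auto
  have c2: "cont F C m (Suc (Suc n)) = F (m + n + 1) * cont F C m (Suc n) + C (m + n) * cont F C m n" for m n
    by simp
  have goal: "B (Suc k) = cont F C 1 k \<and> A (Suc (Suc k)) - B (Suc (Suc k)) * P = L * cont F C 2 k"
  proof (cases k)
    case 0
    then show ?thesis using R[of 0] S by (simp add: algebra_simps)
  next
    case (Suc k1)
    show ?thesis
    proof (cases k1)
      case 0
      then show ?thesis using Suc R[of 0] R[of 1] S by (simp add: algebra_simps numeral_eq_Suc)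
    next
      case (Suc k2)
      have I1: "B (Suc k1) = cont F C 1 k1 \<and> A (Suc (Suc k1)) - B (Suc (Suc k1)) * P = L * cont F C 2 k1"
        using less \<open>k = Suc k1\<close> unfolding A_def B_def L_def P_def by simp
      have I2: "B (Suc k2) = cont F C 1 k2 \<and> A (Suc (Suc k2)) - B (Suc (Suc k2)) * P = L * cont F C 2 k2"
        using less \<open>k = Suc k1\<close> Suc unfolding A_def B_def L_def P_def by simp
      have e1: "B (Suc k) = F k * B k + C (k - 1) * B (k - 1)"
        using R(2)[of k1] \<open>k = Suc k1\<close> Suc by simp
      have e2: "A (Suc (Suc k)) - B (Suc (Suc k)) * P = F (Suc k) * (A (Suc k) - B (Suc k) * P) + C k * (A k - B k * P)"
        using R[of k] \<open>k = Suc k1\<close> Suc by (simp add: algebra_simps)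
      have c1: "cont F C 1 k = F k * cont F C 1 k1 + C k1 * cont F C 1 k2"
        using \<open>k = Suc k1\<close> Suc by simp
      have c3: "cont F C 2 k = F (Suc k) * cont F C 2 k1 + C k * cont F C 2 k2"
        using \<open>k = Suc k1\<close> Suc by (simp add: numeral_eq_Suc)
      show ?thesis
        using I1 I2 e1 e2 c1 c3 \<open>k = Suc k1\<close> Suc by (simp add: algebra_simps)
    qed
  qed
  then show ?case unfolding A_def B_def L_def P_def .
qed

lemma fmono_mono: "fmono m k = mono {m..k}"
  by (simp add: fmono_def mono_def eS_def)

theorem mainTheorem4:
  fixes v \<beta> :: "nat \<Rightarrow> 'a::comm_ring_1" and N :: nat
  assumes "N \<ge> 3"
  defines "f \<equiv> (\<lambda>n. [:v n + v (Suc n):])"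
    and "c \<equiv> (\<lambda>n. [:\<beta> n, 1:])"
  shows "\<exists>At :: 'a poly.
     mA (Tprod v \<beta> N) = mB (Tprod v \<beta> N) * [:v 1:] + At * [:0, 1:]
     \<and> (N = 3 \<longrightarrow> At = f 2)
     \<and> (N \<ge> 4 \<longrightarrow> At = meval f (dops c 2 (N - 2) (fmono 2 (N - 1))))
     \<and> mB (Tprod v \<beta> N) = meval f (dops c 1 (N - 2) (fmono 1 (N - 1)))"
proof (intro exI conjI impI)
  have N1: "Suc (N - 1) = N" and N2: "Suc (Suc (N - 2)) = N" using assms(1) by auto
  have h1: "mB (Tprod v \<beta> N) = cont f c 1 (N - 1)"
    using B_cont[of v \<beta> "N - 1"] unfolding N1 f_def c_def by simp
  have h2: "mA (Tprod v \<beta> N) - mB (Tprod v \<beta> N) * [:v 1:] = [:0, 1:] * cont f c 2 (N - 2)"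
    using B_cont[of v \<beta> "N - 2"] unfolding N2 f_def c_def by simp
  show "mA (Tprod v \<beta> N) = mB (Tprod v \<beta> N) * [:v 1:] + cont f c 2 (N - 2) * [:0, 1:]"
    using h2 by (simp add: algebra_simps)
  show "N = 3 \<Longrightarrow> cont f c 2 (N - 2) = f 2" by simp
  have s1: "{1..N - 1} = {1..<1 + (N - 1)}" and s2: "{2..N - 1} = {2..<2 + (N - 2)}"
    and k1: "N - 2 = 1 + (N - 1) - 2" and k2: "N - 2 = 2 + (N - 2) - 2"
    using assms(1) by auto
  show "cont f c 2 (N - 2) = meval f (dops c 2 (N - 2) (fmono 2 (N - 1)))"
    using Q_cont[of 2 f c "N - 2"] unfolding fmono_mono s2 Q_def by (simp only: k2[symmetric])
  show "mB (Tprod v \<beta> N) = meval f (dops c 1 (N - 2) (fmono 1 (N - 1)))"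
    using Q_cont[of 1 f c "N - 1"] unfolding h1 fmono_mono s1 Q_def by (simp only: k1[symmetric] le_refl)
qed

end
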